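(* Let $C$ be a convex cone in a topological real vector space and $f:C\to\mathbb{R}$ a non-negative function that is positively homogeneous of degree $\alpha>0$. If $f$ is strictly sub-convex, then $f$ is continuous on $\mathrm{ri}(C)$. In particular, if $C=V$ is the whole space, $f$ strictly sub-convex implies $f$ continuous.
   Context: Topological real vector spaces are not assumed Hausdorff. A cone is a subset $C$ with $\lambda C\subseteq C$ for all $\lambda>0$. $f$ is positively homogeneous of degree $\alpha$ if $f(\lambda x)=\lambda^{\alpha}f(x)$ for all $x\in C$, $\lambda>0$. $S_r(f)=\{x\in C: f(x)\le r\}$. For a subset $S$, $\mathrm{Aff}(S)$ is its affine hull; $\mathrm{ri}(S)$, $\mathrm{rc}(S)$ are the interior and closure of $S$ in the subspace topology of $\mathrm{Aff}(S)$. $]x,y[=\{(1-t)x+ty: t\in[0,1]\}\setminus\{x,y\}$. A set $C$ is strictly convex if for any two distinct $x,y\in\mathrm{rc}(C)$, $]x,y[\subseteq\mathrm{ri}(C)$. $f$ is strictly sub-convex if $S_r(f)$ is strictly convex for every $r\in\mathbb{R}$. *)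

theory Defs
  imports "HOL-Analysis.Analysis"
begin

text \<open>A topological real vector space (not assumed Hausdorff): a real vector space
  with a topology for which addition and scalar multiplication are continuous.\<close>
definition tvs :: "'a::{real_vector,topological_space} itself \<Rightarrow> bool" where
  "tvs _ \<longleftrightarrow> continuous_on UNIV (\<lambda>p::'a \<times> 'a. fst p + snd p) \<and>
              continuous_on UNIV (\<lambda>p::real \<times> 'a. fst p *\<^sub>R snd p)"

definition is_cone :: "'a::real_vector set \<Rightarrow> bool" where
  "is_cone C \<longleftrightarrow> (\<forall>x\<in>C. \<forall>l::real. l > 0 \<longrightarrow> l *\<^sub>R x \<in> C)"

definition pos_homogeneous :: "'a::real_vector set \<Rightarrow> real \<Rightarrow> ('a \<Rightarrow> real) \<Rightarrow> bool" where
  "pos_homogeneous C \<alpha> f \<longleftrightarrow> (\<forall>x\<in>C. \<forall>l::real. l > 0 \<longrightarrow> f (l *\<^sub>R x) = l powr \<alpha> * f x)"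

definition sublevel :: "'a set \<Rightarrow> ('a \<Rightarrow> real) \<Rightarrow> real \<Rightarrow> 'a set" where
  "sublevel C f r = {x\<in>C. f x \<le> r}"

definition ri :: "'a::{real_vector,topological_space} set \<Rightarrow> 'a set" where
  "ri S = (top_of_set (affine hull S)) interior_of S"

definition rc :: "'a::{real_vector,topological_space} set \<Rightarrow> 'a set" where
  "rc S = (top_of_set (affine hull S)) closure_of S"

definition strictly_convex_set :: "'a::{real_vector,topological_space} set \<Rightarrow> bool" where
  "strictly_convex_set C \<longleftrightarrow>
     (\<forall>x\<in>rc C. \<forall>y\<in>rc C. x \<noteq> y \<longrightarrow> open_segment x y \<subseteq> ri C)"

definition strictly_subconvex :: "'a::{real_vector,topological_space} set \<Rightarrow> ('a \<Rightarrow> real) \<Rightarrow> bool" where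
  "strictly_subconvex C f \<longleftrightarrow> (\<forall>r::real. strictly_convex_set (sublevel C f r))"

end

theory Submission
  imports Defs
begin


lemma scal_near0:
  assumes "tvs TYPE('a::{real_vector,topological_space})" "open U" "(0::'a) \<in> U"
  shows "\<exists>e>0. \<forall>t. \<bar>t\<bar> < e \<longrightarrow> t *\<^sub>R y \<in> U"
proof -
  have c0: "continuous_on UNIV (\<lambda>p::real \<times> 'a. fst p *\<^sub>R snd p)" using assms(1) by (simp add: tvs_def)
  have "continuous_on UNIV (\<lambda>t::real. (\<lambda>p::real \<times> 'a. fst p *\<^sub>R snd p) (t, y))"
    by (rule continuous_on_compose2[OF c0]) (auto intro: continuous_intros)
  then have c: "continuous_on UNIV (\<lambda>t::real. t *\<^sub>R y)" by simp
  have "open ((\<lambda>t::real. t *\<^sub>R y) -` U)" using open_vimage[OF assms(2) c] .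
  moreover have "0 \<in> (\<lambda>t::real. t *\<^sub>R y) -` U" using assms(3) by simp
  ultimately obtain e where "e > 0" "ball 0 e \<subseteq> (\<lambda>t::real. t *\<^sub>R y) -` U"
    using open_contains_ball by blast
  then show ?thesis by (intro exI[of _ e]) (auto simp: subset_eq dist_real_def)
qed


lemma sub_rc: "S \<subseteq> rc S"
  unfolding rc_def by (rule closure_of_subset) (simp add: hull_subset)

lemma ri_sub: "ri S \<subseteq> S"
  unfolding ri_def by (rule interior_of_subset)

locale SC =
  fixes C :: "'a::{real_vector,topological_space} set" and f :: "'a \<Rightarrow> real" and \<alpha> :: real
  assumes tvs: "tvs TYPE('a)" and cvx: "convex C" and cone: "is_cone C"
    and nn: "\<forall>x\<in>C. f x \<ge> 0" and ap: "\<alpha> > 0" and hom: "pos_homogeneous C \<alpha> f"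
    and sc: "strictly_subconvex C f"
begin

lemma homs: "x \<in> C \<Longrightarrow> t > 0 \<Longrightarrow> f (t *\<^sub>R x) = t powr \<alpha> * f x \<and> t *\<^sub>R x \<in> C"
  using hom cone unfolding pos_homogeneous_def is_cone_def by blast

lemma f0: assumes "0 \<in> C" shows "f 0 = 0"
proof -
  have "f 0 = 2 powr \<alpha> * f 0" using homs[OF assms, of 2] by simp
  moreover have "2 powr \<alpha> > 1" using ap by simp
  ultimately show ?thesis by (metis mult_cancel_right1 less_irrefl)
qed

lemma nz: "x \<in> C \<Longrightarrow> f x > 0 \<Longrightarrow> x \<noteq> 0"
  using f0 by force

lemma small:
  assumes "y \<in> C" "r > 0"
  shows "\<exists>e>0. \<forall>t. 0 < t \<longrightarrow> t \<le> e \<longrightarrow> t *\<^sub>R y \<in> sublevel C f r"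
proof (cases "f y = 0")
  case True
  show ?thesis
    by (rule exI[of _ 1]) (use True assms homs in \<open>auto simp: sublevel_def\<close>)
next
  case False
  then have fy: "f y > 0" using nn assms by force
  define e where "e = (r / f y) powr (1/\<alpha>)"
  have e0: "e > 0" using fy assms by (simp add: e_def)
  have ee: "e powr \<alpha> = r / f y" using ap fy assms by (simp add: e_def powr_powr)
  show ?thesis
  proof (intro exI[of _ e] conjI allI impI)
    fix t :: real assume t: "0 < t" "t \<le> e"
    have "t powr \<alpha> \<le> e powr \<alpha>" using t ap by (intro powr_mono2) auto
    then have "t powr \<alpha> * f y \<le> r" using ee fy by (simp add: pos_le_divide_eq)
    then show "t *\<^sub>R y \<in> sublevel C f r" using homs[OF assms(1) t(1)] by (simp add: sublevel_def)
  qed (use e0 in auto)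
qed

lemma aff: assumes "r > 0" shows "C \<subseteq> affine hull (sublevel C f r)"
proof
  fix x assume x: "x \<in> C"
  obtain e where e: "e > 0" "\<And>t. 0 < t \<Longrightarrow> t \<le> e \<Longrightarrow> t *\<^sub>R x \<in> sublevel C f r"
    using small[OF x assms] by blast
  have a: "(e/2) *\<^sub>R x \<in> affine hull (sublevel C f r)" "e *\<^sub>R x \<in> affine hull (sublevel C f r)"
    using e by (auto intro!: hull_inc)
  have "(2 - 2/e) *\<^sub>R ((e/2) *\<^sub>R x) + (2/e - 1) *\<^sub>R (e *\<^sub>R x) \<in> affine hull (sublevel C f r)"
    by (rule mem_affine[OF affine_affine_hull a]) simp
  moreover have "(2 - 2/e) *\<^sub>R ((e/2) *\<^sub>R x) + (2/e - 1) *\<^sub>R (e *\<^sub>R x) = x"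
    using e(1) by (simp add: scaleR_add_left[symmetric] field_simps)
  ultimately show "x \<in> affine hull (sublevel C f r)" by simp
qed


lemma zero_rc:
  assumes y: "y \<in> C" "y \<noteq> 0" and r: "r > 0"
  shows "0 \<in> rc (sublevel C f r)"
proof -
  obtain e where e: "e > 0" "\<And>t. 0 < t \<Longrightarrow> t \<le> e \<Longrightarrow> t *\<^sub>R y \<in> sublevel C f r"
    using small[OF y(1) r] by blast
  have a: "(e/2) *\<^sub>R y \<in> affine hull (sublevel C f r)" "e *\<^sub>R y \<in> affine hull (sublevel C f r)"
    using e by (auto intro!: hull_inc)
  have "2 *\<^sub>R ((e/2) *\<^sub>R y) + (-1) *\<^sub>R (e *\<^sub>R y) \<in> affine hull (sublevel C f r)"
    by (rule mem_affine[OF affine_affine_hull a]) simp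
  then have z: "0 \<in> affine hull (sublevel C f r)" by simp
  show ?thesis
    unfolding rc_def in_closure_of
  proof (intro conjI allI impI)
    show "0 \<in> topspace (top_of_set (affine hull sublevel C f r))" using z by simp
    fix T assume T: "0 \<in> T \<and> openin (top_of_set (affine hull sublevel C f r)) T"
    then obtain U where U: "open U" "T = affine hull (sublevel C f r) \<inter> U"
      by (auto simp: openin_open)
    then have "0 \<in> U" using T by auto
    then obtain e' where e': "e' > 0" "\<And>t. \<bar>t\<bar> < e' \<Longrightarrow> t *\<^sub>R y \<in> U"
      using scal_near0[OF tvs U(1)] by blast
    define t where "t = min e (e'/2)"
    have "t > 0" "t \<le> e" "\<bar>t\<bar> < e'" using e e' by (auto simp: t_def)
    then have "t *\<^sub>R y \<in> sublevel C f r" "t *\<^sub>R y \<in> U" using e e' by auto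
    then show "\<exists>z. z \<in> sublevel C f r \<and> z \<in> T" using U by (auto intro: hull_inc)
  qed
qed

lemma seg:
  assumes "a \<in> rc (sublevel C f r)" "b \<in> rc (sublevel C f r)" "a \<noteq> b" "0 < u" "u < 1"
  shows "(1 - u) *\<^sub>R a + u *\<^sub>R b \<in> ri (sublevel C f r)"
proof -
  have "(1 - u) *\<^sub>R a + u *\<^sub>R b \<in> open_segment a b" using assms by (auto simp: in_segment)
  then show ?thesis using sc assms unfolding strictly_subconvex_def strictly_convex_set_def by blast
qed

lemma lower:
  assumes x: "x0 \<in> C" and r: "0 < r" "r < f x0"
  shows "x0 \<notin> rc (sublevel C f r)"
proof
  assume x0: "x0 \<in> rc (sublevel C f r)"
  have fx: "f x0 > 0" using r by simp
  have n: "x0 \<noteq> 0" using nz[OF x fx] .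
  have z: "0 \<in> rc (sublevel C f r)" using zero_rc[OF x n r(1)] .
  define q where "q = (r / f x0) powr (1/\<alpha>)"
  have q0: "q > 0" using r fx by (simp add: q_def)
  have "q < 1 powr (1/\<alpha>)" unfolding q_def using r fx ap by (intro powr_less_mono2) auto
  then have q1: "q < 1" by simp
  have qq: "q powr \<alpha> = r / f x0" using ap fx r by (simp add: q_def powr_powr)
  define t where "t = (q + 1) / 2"
  have t: "0 < t" "t < 1" "q < t" using q0 q1 by (auto simp: t_def)
  have "(1 - t) *\<^sub>R 0 + t *\<^sub>R x0 \<in> ri (sublevel C f r)"
    by (rule seg[OF z x0]) (use n t in auto)
  then have "t *\<^sub>R x0 \<in> sublevel C f r" using ri_sub by auto
  then have le: "t powr \<alpha> * f x0 \<le> r" using homs[OF x t(1)] by (simp add: sublevel_def)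
  have "q powr \<alpha> < t powr \<alpha>" using t q0 ap by (intro powr_less_mono2) auto
  then have "r < t powr \<alpha> * f x0" using qq fx by (simp add: pos_divide_less_eq)
  then show False using le by simp
qed

lemma upper:
  assumes x: "x0 \<in> ri C" and r: "f x0 < r"
  shows "x0 \<in> ri (sublevel C f r)"
proof -
  have xC: "x0 \<in> C" using x ri_sub by auto
  have r0: "r > 0" using r nn xC by force
  show ?thesis
  proof (cases "x0 = 0")
    case False
    define l where "l = (if f x0 = 0 then 2 else (r / f x0) powr (1/\<alpha>))"
    have l: "l > 1 \<and> f (l *\<^sub>R x0) \<le> r"
    proof (cases "f x0 = 0")
      case True
      then show ?thesis using homs[OF xC, of 2] r0 by (simp add: l_def)
    next
      case False
      then have fx: "f x0 > 0" using nn xC by force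
      have "1 powr (1/\<alpha>) < (r / f x0) powr (1/\<alpha>)" using r fx ap by (intro powr_less_mono2) auto
      then have l1: "l > 1" using False by (simp add: l_def)
      have "l powr \<alpha> = r / f x0" using ap fx r0 False by (simp add: l_def powr_powr)
      then have "f (l *\<^sub>R x0) = r" using homs[OF xC, of l] l1 fx by simp
      then show ?thesis using l1 by simp
    qed
    have b: "l *\<^sub>R x0 \<in> rc (sublevel C f r)"
      using l homs[OF xC, of l] sub_rc by (force simp: sublevel_def)
    have z: "0 \<in> rc (sublevel C f r)" using zero_rc[OF xC False r0] .
    have "(1 - 1/l) *\<^sub>R 0 + (1/l) *\<^sub>R (l *\<^sub>R x0) \<in> ri (sublevel C f r)"
      by (rule seg[OF z b]) (use l False in auto)
    then show ?thesis using l by simp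
  next
    case True
    show ?thesis
    proof (cases "C \<subseteq> {0}")
      case True
      then have "sublevel C f r = C" using f0 r0 by (auto simp: sublevel_def)
      then show ?thesis using x by simp
    next
      case False
      then obtain y where y: "y \<in> C" "y \<noteq> 0" by auto
      have 0: "0 \<in> C" using xC True by simp
      obtain T where T: "openin (top_of_set (affine hull C)) T" "0 \<in> T" "T \<subseteq> C"
        using x True unfolding ri_def interior_of_def by auto
      then obtain U where U: "open U" "T = affine hull C \<inter> U" by (auto simp: openin_open)
      then have "0 \<in> U" using T by auto
      then obtain e where e: "e > 0" "\<And>t. \<bar>t\<bar> < e \<Longrightarrow> t *\<^sub>R (-y) \<in> U"
        using scal_near0[OF tvs U(1)] by blast
      define t where "t = e/2"
      have t: "t > 0" "\<bar>t\<bar> < e" using e by (auto simp: t_def)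
      have "(1 + t) *\<^sub>R 0 + (-t) *\<^sub>R y \<in> affine hull C"
        by (rule mem_affine[OF affine_affine_hull]) (use 0 y in \<open>auto intro: hull_inc\<close>)
      then have "t *\<^sub>R (-y) \<in> T" using U e t by simp
      then have tyC: "t *\<^sub>R (-y) \<in> C" using T by auto
      have "(1/t) *\<^sub>R (t *\<^sub>R (-y)) \<in> C" using homs[OF tyC, of "1/t"] t by simp
      then have my: "-y \<in> C" using t by simp
      obtain e1 where e1: "e1 > 0" "\<And>t. 0 < t \<Longrightarrow> t \<le> e1 \<Longrightarrow> t *\<^sub>R y \<in> sublevel C f r"
        using small[OF y(1) r0] by blast
      obtain e2 where e2: "e2 > 0" "\<And>t. 0 < t \<Longrightarrow> t \<le> e2 \<Longrightarrow> t *\<^sub>R (-y) \<in> sublevel C f r"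
        using small[OF my r0] by blast
      define s where "s = min e1 e2"
      have s: "s > 0" "s \<le> e1" "s \<le> e2" using e1 e2 by (auto simp: s_def)
      have a: "s *\<^sub>R y \<in> rc (sublevel C f r)" "- (s *\<^sub>R y) \<in> rc (sublevel C f r)"
        using e1(2)[OF s(1,2)] e2(2)[OF s(1,3)] sub_rc by auto
      have ne: "s *\<^sub>R y \<noteq> - (s *\<^sub>R y)"
      proof
        assume eq: "s *\<^sub>R y = - (s *\<^sub>R y)"
        have "s *\<^sub>R y + s *\<^sub>R y = 0" by (subst eq) simp
        then have "(s + s) *\<^sub>R y = 0" by (simp only: scaleR_left_distrib)
        then show False using s y by simp
      qed
      have "(1 - 1/2) *\<^sub>R (s *\<^sub>R y) + (1/2) *\<^sub>R (- (s *\<^sub>R y)) \<in> ri (sublevel C f r)"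
        by (rule seg[OF a ne]) auto
      then show ?thesis using True by simp
    qed
  qed
qed


lemma cont: "continuous_on (ri C) f"
  unfolding continuous_on_def order_tendsto_iff eventually_at_topological
proof (intro ballI conjI allI impI)
  fix x0 assume x: "x0 \<in> ri C"
  have xC: "x0 \<in> C" using x ri_sub by auto
  {
    fix a assume a: "a < f x0"
    show "\<exists>S. open S \<and> x0 \<in> S \<and> (\<forall>y\<in>S. y \<noteq> x0 \<longrightarrow> y \<in> ri C \<longrightarrow> a < f y)"
    proof (cases "a < 0")
      case True
      show ?thesis
        by (rule exI[of _ UNIV]) (use True nn ri_sub in force)
    next
      case False
      define r where "r = (a + f x0) / 2"
      have r: "0 < r" "r < f x0" "a < r" using a False by (auto simp: r_def)
      have nrc: "x0 \<notin> rc (sublevel C f r)" using lower[OF xC r(1,2)] .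
      have xa: "x0 \<in> affine hull (sublevel C f r)" using aff[OF r(1)] xC by auto
      obtain T where T: "x0 \<in> T" "openin (top_of_set (affine hull sublevel C f r)) T"
        "\<And>y. y \<in> sublevel C f r \<Longrightarrow> y \<notin> T"
        using nrc xa unfolding rc_def in_closure_of by auto
      then obtain U where U: "open U" "T = affine hull (sublevel C f r) \<inter> U" by (auto simp: openin_open)
      show ?thesis
      proof (intro exI[of _ U] conjI ballI impI)
        show "open U" "x0 \<in> U" using U T by auto
        fix y assume y: "y \<in> U" "y \<noteq> x0" "y \<in> ri C"
        then have "y \<in> C" using ri_sub by auto
        then have "y \<in> T" using U y aff[OF r(1)] by auto
        then have "y \<notin> sublevel C f r" using T by auto
        then show "a < f y" using \<open>y \<in> C\<close> r by (auto simp: sublevel_def)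
      qed
    qed
  }
  {
    fix a assume a: "a > f x0"
    define r where "r = (a + f x0) / 2"
    have r: "f x0 < r" "r < a" using a by (auto simp: r_def)
    have "x0 \<in> ri (sublevel C f r)" using upper[OF x r(1)] .
    then obtain T where T: "openin (top_of_set (affine hull sublevel C f r)) T" "x0 \<in> T" "T \<subseteq> sublevel C f r"
      unfolding ri_def interior_of_def by auto
    then obtain U where U: "open U" "T = affine hull (sublevel C f r) \<inter> U" by (auto simp: openin_open)
    have r0: "r > 0" using r nn xC by force
    show "\<exists>S. open S \<and> x0 \<in> S \<and> (\<forall>y\<in>S. y \<noteq> x0 \<longrightarrow> y \<in> ri C \<longrightarrow> f y < a)"
    proof (intro exI[of _ U] conjI ballI impI)
      show "open U" "x0 \<in> U" using U T by auto
      fix y assume y: "y \<in> U" "y \<noteq> x0" "y \<in> ri C"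
      then have "y \<in> C" using ri_sub by auto
      then have "y \<in> T" using U y aff[OF r0] by auto
      then show "f y < a" using T r by (auto simp: sublevel_def)
    qed
  }
qed

end

theorem mainTheorem5:
  fixes C :: "'a::{real_vector,topological_space} set"
    and f :: "'a \<Rightarrow> real"
    and \<alpha> :: real
  assumes "tvs TYPE('a)"
    and "convex C" and "is_cone C"
    and "\<forall>x\<in>C. f x \<ge> 0"
    and "\<alpha> > 0" and "pos_homogeneous C \<alpha> f"
    and "strictly_subconvex C f"
  shows "continuous_on (ri C) f \<and> (C = UNIV \<longrightarrow> continuous_on UNIV f)"
proof -
  interpret SC C f \<alpha> using assms by unfold_locales
  have "ri (UNIV::'a set) = UNIV" by (simp add: ri_def)
  then show ?thesis using cont by auto
qed

end
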